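(* Let $\lambda$ be a nonzero real number. For every integer $n\ge 0$ and every $x$ in a neighborhood of $0$, $$\mathrm{bel}_{n,\lambda}(x)=\mathrm{Bel}_{n,\lambda}\!\left(\frac{x}{1+\lambda x}\right).$$
   Context: For nonzero $\lambda\in\mathbb{R}$, $e_{\lambda}(t)=(1+\lambda t)^{1/\lambda}$. The degenerate Bell polynomials $\mathrm{Bel}_{n,\lambda}(x)$ are defined by $e_{\lambda}\big(x(e^{t}-1)\big)=\sum_{n=0}^{\infty}\mathrm{Bel}_{n,\lambda}(x)\frac{t^{n}}{n!}$. The degenerate Bell polynomials of the second kind $\mathrm{bel}_{n,\lambda}(x)$ are defined by $e_{\lambda}(xe^{t})\cdot e_{\lambda}(x)^{-1}=\sum_{n=0}^{\infty}\mathrm{bel}_{n,\lambda}(x)\frac{t^{n}}{n!}$. *)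

theory Defs
  imports "HOL-Analysis.Analysis"
begin

definition deg_exp :: "real \<Rightarrow> real \<Rightarrow> real" where
  "deg_exp lam t = (1 + lam * t) powr (1 / lam)"

text \<open>Coefficients of t^n/n! of a generating function are its n-th derivatives at t = 0.\<close>
definition egf_coeff :: "(real \<Rightarrow> real) \<Rightarrow> nat \<Rightarrow> real" where
  "egf_coeff f n = (deriv ^^ n) f 0"

definition deg_Bel :: "nat \<Rightarrow> real \<Rightarrow> real \<Rightarrow> real" where
  "deg_Bel n lam x = egf_coeff (\<lambda>t. deg_exp lam (x * (exp t - 1))) n"

definition deg_bel :: "nat \<Rightarrow> real \<Rightarrow> real \<Rightarrow> real" where
  "deg_bel n lam x = egf_coeff (\<lambda>t. deg_exp lam (x * exp t) * inverse (deg_exp lam x)) n"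

end

theory Submission
  imports Defs
begin

lemma deriv_funpow_cong:
  assumes "open S" "\<And>z. z \<in> S \<Longrightarrow> f z = g z"
  shows "\<forall>z\<in>S. (deriv ^^ n) f z = (deriv ^^ n) g z"
proof (induction n)
  case 0
  then show ?case using assms(2) by simp
next
  case (Suc n)
  show ?case
  proof
    fix z assume z: "z \<in> S"
    have ev: "\<forall>\<^sub>F w in nhds z. (deriv ^^ n) f w = (deriv ^^ n) g w"
      using Suc eventually_nhds_in_open[OF assms(1) z] by (auto elim: eventually_mono)
    show "(deriv ^^ Suc n) f z = (deriv ^^ Suc n) g z"
      using deriv_cong_ev[OF ev refl] by simp
  qed
qed

lemma pointwise:
  fixes lam x t :: real
  assumes "lam \<noteq> 0" "\<bar>lam * x\<bar> < 1/2" "t < ln 2"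
  shows "deg_exp lam (x * exp t) * inverse (deg_exp lam x)
       = deg_exp lam (x / (1 + lam * x) * (exp t - 1))"
proof -
  have e: "exp t < 2" using assms(3) by (metis exp_less_cancel_iff exp_ln zero_less_numeral)
  have p: "exp t > 0" by simp
  have "\<bar>lam * x\<bar> * exp t < 1/2 * 2"
    by (rule mult_strict_mono[OF assms(2) e]) simp_all
  hence "\<bar>lam * (x * exp t)\<bar> < 1" using p by (simp add: abs_mult)
  hence a: "1 + lam * (x * exp t) > 0" by linarith
  have b: "1 + lam * x > 0" using assms(2) by linarith
  have eq: "1 + lam * (x / (1 + lam * x) * (exp t - 1)) = (1 + lam * (x * exp t)) / (1 + lam * x)"
    using b by (simp add: field_simps)
  have "((1 + lam * (x * exp t)) / (1 + lam * x)) powr (1/lam)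
      = (1 + lam * (x * exp t)) powr (1/lam) / (1 + lam * x) powr (1/lam)"
    using a b by (auto intro: powr_divide)
  then show ?thesis unfolding deg_exp_def eq by (simp add: divide_inverse)
qed

theorem theorem6:
  fixes lam :: real
  assumes "lam \<noteq> 0"
  shows "\<forall>\<^sub>F x in nhds 0. \<forall>n. deg_bel n lam x = deg_Bel n lam (x / (1 + lam * x))"
proof -
  have "((\<lambda>x. \<bar>lam * x\<bar>) \<longlongrightarrow> \<bar>lam * 0\<bar>) (nhds 0)"
    by (intro tendsto_intros) (rule filterlim_ident)
  hence ev: "\<forall>\<^sub>F x in nhds 0. \<bar>lam * x\<bar> < 1/2"
    by (rule order_tendstoD(2)) simp
  show ?thesis
  proof (rule eventually_mono[OF ev], intro allI)
    fix x n assume x: "\<bar>lam * x\<bar> < 1/2"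
    have "\<forall>z\<in>{..<ln 2}. (deriv ^^ n) (\<lambda>t. deg_exp lam (x * exp t) * inverse (deg_exp lam x)) z
        = (deriv ^^ n) (\<lambda>t. deg_exp lam (x / (1 + lam * x) * (exp t - 1))) z"
      by (rule deriv_funpow_cong[OF open_lessThan], rule pointwise[OF assms x], simp)
    moreover have "(0::real) \<in> {..<ln 2}" by simp
    ultimately show "deg_bel n lam x = deg_Bel n lam (x / (1 + lam * x))"
      unfolding deg_bel_def deg_Bel_def egf_coeff_def by blast
  qed
qed

end
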